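(* Let $G$ be a connected bipartite circulant graph and let $n\ge 1$. Then $K_{n,n} \otimes G$ is a circulant graph.
   Context: Graphs have no multiple edges but may have loops. The tensor product $G \otimes H$ of graphs $G$ and $H$ has vertex set $V(G)\times V(H)$, with $(g,h)$ adjacent to $(g',h')$ if and only if $g$ is adjacent to $g'$ in $G$ and $h$ is adjacent to $h'$ in $H$. $K_{n,n}$ denotes the complete bipartite graph with both parts of size $n$. For an integer $N\ge 1$ and a set $S$ of integers, the circulant graph $C_NS$ has vertex set $\{0,1,\dots,N-1\}$, with $i$ adjacent to $j$ if and only if $i-j \equiv \pm s \pmod N$ for some $s\in S$. A graph is circulant if it is isomorphic to some $C_NS$ (this includes disconnected graphs); equivalently, if it has an automorphism that permutes all its vertices in a single cycle. *)

theory Defs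
  imports Main
begin

type_synonym 'a graph = "'a set \<times> ('a \<times> 'a) set"

definition verts :: "'a graph \<Rightarrow> 'a set" where "verts G = fst G"
definition edges :: "'a graph \<Rightarrow> ('a \<times> 'a) set" where "edges G = snd G"

definition is_graph :: "'a graph \<Rightarrow> bool" where
  "is_graph G \<longleftrightarrow> finite (verts G) \<and> edges G \<subseteq> verts G \<times> verts G \<and> sym (edges G)"

definition connected_graph :: "'a graph \<Rightarrow> bool" where
  "connected_graph G \<longleftrightarrow> verts G \<noteq> {} \<and>
     (\<forall>u\<in>verts G. \<forall>v\<in>verts G. (u, v) \<in> (edges G)\<^sup>*)"

definition bipartite :: "'a graph \<Rightarrow> bool" where
  "bipartite G \<longleftrightarrow> (\<exists>A. \<forall>(u, v)\<in>edges G. (u \<in> A \<longleftrightarrow> v \<notin> A))"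

definition tensor :: "'a graph \<Rightarrow> 'b graph \<Rightarrow> ('a \<times> 'b) graph" where
  "tensor G H = (verts G \<times> verts H,
     {((g, h), (g', h')). (g, g') \<in> edges G \<and> (h, h') \<in> edges H})"

definition Knn :: "nat \<Rightarrow> nat graph" where
  "Knn n = ({0..<2*n}, {(i, j). i < 2*n \<and> j < 2*n \<and> (i < n \<longleftrightarrow> n \<le> j)})"

definition circ_graph :: "nat \<Rightarrow> int set \<Rightarrow> nat graph" where
  "circ_graph N S = ({0..<N}, {(i, j). i < N \<and> j < N \<and>
      (\<exists>s\<in>S. (int i - int j) mod int N = s mod int N \<or> (int i - int j) mod int N = (- s) mod int N)})"

definition graph_iso :: "'a graph \<Rightarrow> 'b graph \<Rightarrow> bool" where
  "graph_iso G H \<longleftrightarrow> (\<exists>f. bij_betw f (verts G) (verts H) \<and>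
     (\<forall>u\<in>verts G. \<forall>v\<in>verts G. (u, v) \<in> edges G \<longleftrightarrow> (f u, f v) \<in> edges H))"

definition circulant :: "'a graph \<Rightarrow> bool" where
  "circulant G \<longleftrightarrow> (\<exists>N S. N \<ge> 1 \<and> graph_iso G (circ_graph N S))"

end

theory Submission
  imports Defs
begin

lemma circ_P:
  fixes P :: "int \<Rightarrow> bool"
  assumes M: "M > 0" and cl: "\<And>d k. P (d + int M * k) = P d" and ng: "\<And>d. P (- d) = P d"
  shows "(x, y) \<in> edges (circ_graph M (Collect P)) \<longleftrightarrow> x < M \<and> y < M \<and> P (int x - int y)"
proof
  assume h: "(x, y) \<in> edges (circ_graph M (Collect P))"
  then obtain s where s: "P s" and xy: "x < M" "y < M"
    and c: "(int x - int y) mod int M = s mod int M \<or> (int x - int y) mod int M = (- s) mod int M"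
    by (auto simp: edges_def circ_graph_def)
  have "P (int x - int y)"
  proof (cases "(int x - int y) mod int M = s mod int M")
    case True
    then obtain k where "int x - int y = s + int M * k"
      by (metis mod_eqE mult.commute add.commute)
    then show ?thesis using cl s by simp
  next
    case False
    then have "(int x - int y) mod int M = (- s) mod int M" using c by simp
    then obtain k where "int x - int y = - s + int M * k"
      by (metis mod_eqE mult.commute add.commute)
    then show ?thesis using cl[of "- s" k] ng[of s] s by simp
  qed
  then show "x < M \<and> y < M \<and> P (int x - int y)" using xy by simp
next
  assume "x < M \<and> y < M \<and> P (int x - int y)"
  then show "(x, y) \<in> edges (circ_graph M (Collect P))"
    by (auto simp: edges_def circ_graph_def)
qed


theorem theorem7:
  fixes G :: "'a graph" and n :: nat
  assumes "is_graph G" and "connected_graph G" and "bipartite G" and "circulant G"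
    and "n \<ge> 1"
  shows "circulant (tensor (Knn n) G)"
proof -
  obtain N S where N: "N \<ge> 1" and iso: "graph_iso G (circ_graph N S)"
    using assms(4) by (auto simp: circulant_def)
  obtain f where fb: "bij_betw f (verts G) {0..<N}"
    and fe: "\<And>u v. u \<in> verts G \<Longrightarrow> v \<in> verts G \<Longrightarrow>
         (u, v) \<in> edges G \<longleftrightarrow> (f u, f v) \<in> edges (circ_graph N S)"
    using iso by (auto simp: graph_iso_def verts_def circ_graph_def)
  obtain A where A: "\<And>u v. (u, v) \<in> edges G \<Longrightarrow> (u \<in> A \<longleftrightarrow> v \<notin> A)"
    using assms(3) by (auto simp: bipartite_def)
  have fin: "finite (verts G)" using assms(1) by (simp add: is_graph_def)
  have fN: "\<And>v. v \<in> verts G \<Longrightarrow> f v < N" using fb by (auto simp: bij_betw_def)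
  have finj: "inj_on f (verts G)" using fb by (simp add: bij_betw_def)
  have cardV: "card (verts G) = N" using bij_betw_same_card[OF fb] by simp
  define M where "M = 2 * N * n"
  have M0: "M > 0" using N assms(5) by (simp add: M_def)
  define cc :: "nat \<Rightarrow> 'a \<Rightarrow> nat" where "cc i v = (if (n \<le> i) = (v \<in> A) then 0 else 1)" for i v
  define \<phi> :: "nat \<times> 'a \<Rightarrow> nat" where "\<phi> x = 2 * (f (snd x) + N * (fst x mod n)) + cc (fst x) (snd x)" for x
  define P :: "int \<Rightarrow> bool" where
    "P d = (even d \<and> (\<exists>s\<in>S. (d div 2) mod int N = s mod int N \<or> (d div 2) mod int N = (- s) mod int N))" for d
  have Pcl: "P (d + int M * k) = P d" for d k
  proof -
    have e: "even (d + int M * k) = even d" by (simp add: M_def)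
    have "even d \<Longrightarrow> (d + int M * k) div 2 = d div 2 + int N * (int n * k)"
      by (auto simp: M_def elim!: evenE)
    then have "even d \<Longrightarrow> (d + int M * k) div 2 mod int N = d div 2 mod int N" by simp
    then show ?thesis unfolding P_def using e by auto
  qed
  have Png: "P (- d) = P d" for d
  proof -
    have "even d \<Longrightarrow> (- d) div 2 = - (d div 2)" by (auto elim!: evenE)
    have "\<And>x s. x mod int N = s mod int N \<Longrightarrow> (- x) mod int N = (- s) mod int N"
      by (metis mod_minus_eq)
    note mm = this
    have Q: "(\<exists>s\<in>S. (- x) mod int N = s mod int N \<or> (- x) mod int N = (- s) mod int N)
      \<longleftrightarrow> (\<exists>s\<in>S. x mod int N = s mod int N \<or> x mod int N = (- s) mod int N)" for x
    proof
      assume "\<exists>s\<in>S. (- x) mod int N = s mod int N \<or> (- x) mod int N = (- s) mod int N"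
      then obtain s where "s \<in> S" "(- x) mod int N = s mod int N \<or> (- x) mod int N = (- s) mod int N" by blast
      then show "\<exists>s\<in>S. x mod int N = s mod int N \<or> x mod int N = (- s) mod int N"
        using mm[of "- x" s] mm[of "- x" "- s"] by auto
    next
      assume "\<exists>s\<in>S. x mod int N = s mod int N \<or> x mod int N = (- s) mod int N"
      then obtain s where "s \<in> S" "x mod int N = s mod int N \<or> x mod int N = (- s) mod int N" by blast
      then show "\<exists>s\<in>S. (- x) mod int N = s mod int N \<or> (- x) mod int N = (- s) mod int N"
        using mm[of x s] mm[of x "- s"] by auto
    qed
    show ?thesis
    proof (cases "even d")
      case True
      then show ?thesis unfolding P_def using Q[of "d div 2"] \<open>even d \<Longrightarrow> (- d) div 2 = - (d div 2)\<close> by simp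
    next
      case False
      then show ?thesis unfolding P_def by simp
    qed
  qed
  let ?V = "verts (tensor (Knn n) G)"
  have V: "?V = {0..<2*n} \<times> verts G" by (simp add: tensor_def verts_def Knn_def)
  have cc01: "cc i v \<le> 1" for i v by (simp add: cc_def)
  have \<phi>lt: "\<phi> x < M" if xV: "x \<in> ?V" for x
  proof -
    obtain i v where x: "x = (i, v)" "i < 2 * n" "v \<in> verts G" using xV V by auto
    have "i mod n < n" using assms(5) by simp
    then have "i mod n + 1 \<le> n" by simp
    then have "N * (i mod n + 1) \<le> N * n" by (rule mult_left_mono) simp
    moreover have "f v < N" using fN x by simp
    ultimately have "f v + N * (i mod n) < N * n" by (simp add: algebra_simps)
    then show ?thesis using cc01[of i v] by (simp add: \<phi>_def x M_def)
  qed
  have \<phi>inj: "inj_on \<phi> ?V"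
  proof
    fix x y assume x: "x \<in> ?V" and y: "y \<in> ?V" and e: "\<phi> x = \<phi> y"
    obtain i v where xx: "x = (i, v)" "i < 2 * n" "v \<in> verts G" using x V by auto
    obtain j w where yy: "y = (j, w)" "j < 2 * n" "w \<in> verts G" using y V by auto
    have e1: "cc i v = cc j w" using e cc01[of i v] cc01[of j w] unfolding \<phi>_def xx yy by simp presburger
    then have e2: "f v + N * (i mod n) = f w + N * (j mod n)" using e unfolding \<phi>_def xx yy by simp
    have "f v = f w"
      using e2 fN[OF xx(3)] fN[OF yy(3)]
      by (metis mod_mult_self2 mod_less mult.commute)
    then have vw: "v = w" using finj xx(3) yy(3) by (meson inj_onD)
    then have "N * (i mod n) = N * (j mod n)" using e2 by simp
    then have m: "i mod n = j mod n" using N by simp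
    have "(n \<le> i) = (n \<le> j)" using e1 vw by (auto simp: cc_def split: if_splits)
    then have "i = j"
    proof -
      have r1: "k = n + k mod n" if "k < 2 * n" "n \<le> k" for k
        using that by (simp add: le_mod_geq)
      have r2: "k = k mod n" if "\<not> n \<le> k" for k
        using that by simp
      have fl: "(n \<le> i) = (n \<le> j)" by fact
      show ?thesis
      proof (cases "n \<le> i")
        case True
        then show ?thesis using r1[OF xx(2) True] r1[OF yy(2)] fl m by linarith
      next
        case False
        then show ?thesis using r2[of i] r2[of j] fl m by linarith
      qed
    qed
    then show "x = y" using xx yy vw by simp
  qed
  have cardT: "card ?V = M" using V cardV fin by (simp add: card_cartesian_product M_def)
  have bij: "bij_betw \<phi> ?V {0..<M}"
  proof -
    have sub: "\<phi> ` ?V \<subseteq> {0..<M}" using \<phi>lt by auto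
    have "card (\<phi> ` ?V) = M" using card_image[OF \<phi>inj] cardT by simp
    then have "\<phi> ` ?V = {0..<M}" using sub by (simp add: card_subset_eq)
    then show ?thesis using \<phi>inj by (simp add: bij_betw_def)
  qed
  have edge: "(x, y) \<in> edges (tensor (Knn n) G) \<longleftrightarrow> (\<phi> x, \<phi> y) \<in> edges (circ_graph M (Collect P))"
    if x: "x \<in> ?V" and y: "y \<in> ?V" for x y
  proof -
    obtain i v where xx: "x = (i, v)" "i < 2 * n" "v \<in> verts G" using x V by auto
    obtain j w where yy: "y = (j, w)" "j < 2 * n" "w \<in> verts G" using y V by auto
    have R: "(\<phi> x, \<phi> y) \<in> edges (circ_graph M (Collect P)) \<longleftrightarrow> P (int (\<phi> x) - int (\<phi> y))"
      using circ_P[OF M0 Pcl Png] \<phi>lt x y by blast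
    define D where "D = int (f v) - int (f w) + int N * (int (i mod n) - int (j mod n))"
    have dd: "int (\<phi> x) - int (\<phi> y) = 2 * D + (int (cc i v) - int (cc j w))"
      by (simp add: \<phi>_def xx yy D_def algebra_simps)
    have ev: "even (int (\<phi> x) - int (\<phi> y)) \<longleftrightarrow> cc i v = cc j w"
      using dd cc01[of i v] cc01[of j w] by (auto simp: cc_def split: if_splits)
    have dv: "cc i v = cc j w \<Longrightarrow> (int (\<phi> x) - int (\<phi> y)) div 2 mod int N = (int (f v) - int (f w)) mod int N"
      using dd by (simp add: D_def)
    have G: "(v, w) \<in> edges G \<longleftrightarrow> (\<exists>s\<in>S. (int (f v) - int (f w)) mod int N = s mod int N \<or> (int (f v) - int (f w)) mod int N = (- s) mod int N)"
      using fe[OF xx(3) yy(3)] fN[OF xx(3)] fN[OF yy(3)] by (simp add: edges_def circ_graph_def)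
    have T: "(x, y) \<in> edges (tensor (Knn n) G) \<longleftrightarrow> ((n \<le> i) \<noteq> (n \<le> j)) \<and> (v, w) \<in> edges G"
      using xx yy by (auto simp: tensor_def edges_def Knn_def)
    show ?thesis
    proof (cases "(v, w) \<in> edges G")
      case True
      then have "cc i v = cc j w \<longleftrightarrow> (n \<le> i) \<noteq> (n \<le> j)" using A[OF True] by (auto simp: cc_def)
      then show ?thesis using R T ev dv G True unfolding P_def by auto
    next
      case False
      then show ?thesis using R T ev dv G unfolding P_def by auto
    qed
  qed
  have "graph_iso (tensor (Knn n) G) (circ_graph M (Collect P))"
    unfolding graph_iso_def
    using bij edge by (auto simp: circ_graph_def verts_def)
  moreover have "M \<ge> 1" using M0 by simp
  ultimately show ?thesis unfolding circulant_def by blast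
qed

end
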